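(* Let $X$ and $Y$ be real random variables with densities $p_X,p_Y$, where $p_Y(y)\le C<\infty$ for all $y\in\mathbb{R}$ and the law of $X$ is absolutely continuous with respect to the law of $Y$. Then for every $A>0$, with $\hat{\mathcal{A}}:=\{y:\,p_Y(y)\ge 1/A\}$, and every $s>1$, \[ \begin{aligned} \mathrm{KL}(X\|Y)\le\;&(1+|\ln C|)\big[\mathbb{P}(Y\in\hat{\mathcal{A}}^c)+\|p_X-p_Y\|_1\big]\\ &+\big(\mathbb{E}_X|\ln p_Y(X)|^s\big)^{1/s}\big[\mathbb{P}(Y\in\hat{\mathcal{A}}^c)+\|p_X-p_Y\|_1\big]^{1-1/s}\\ &+(1+A)\|p_X-p_Y\|_2^2 . \end{aligned} \]
   Context: $\mathrm{KL}(X\|Y)=\int p_X\ln(p_X/p_Y)$ is the Kullback–Leibler divergence; $\|\cdot\|_q$ is the $L^q(\mathbb{R})$ norm with respect to Lebesgue measure; $\mathbb{E}_X|\ln p_Y(X)|^s=\int p_X|\ln p_Y|^s$. *)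

theory Defs
  imports "HOL-Analysis.Analysis"
begin

definition KL_dens :: "(real \<Rightarrow> real) \<Rightarrow> (real \<Rightarrow> real) \<Rightarrow> ereal" where
  "KL_dens pX pY =
     enn2ereal (\<integral>\<^sup>+ x. ennreal (pX x * ln (pX x / pY x)) \<partial>lborel)
   - enn2ereal (\<integral>\<^sup>+ x. ennreal (- (pX x * ln (pX x / pY x))) \<partial>lborel)"

definition enn_powr :: "ennreal \<Rightarrow> real \<Rightarrow> ennreal" where
  "enn_powr e r = (if e = \<infinity> then \<infinity> else ennreal (enn2real e powr r))"

definition is_density :: "(real \<Rightarrow> real) \<Rightarrow> bool" where
  "is_density p \<longleftrightarrow> p \<in> borel_measurable borel \<and> (\<forall>x. 0 \<le> p x)
     \<and> (\<integral>\<^sup>+ x. ennreal (p x) \<partial>lborel) = 1"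

end

theory Submission imports Defs begin

lemma pw_upper:
  fixes f g A :: real
  assumes f: "0 \<le> f" and g: "0 \<le> g" and A: "A > 0"
  shows "f * ln (f / g) \<le> f - g + ((if 1/A \<le> g then 0 else g + f * \<bar>ln g\<bar>) + (1+A) * (f - g)\<^sup>2)"
proof (cases "1/A \<le> g")
  case True
  then have gp: "g > 0" using A by (smt (verit) divide_pos_pos)
  have Ag: "1/g \<le> A" using True gp A by (simp add: field_simps)
  have "f * ln (f / g) \<le> f * (f/g - 1)"
  proof (cases "f = 0")
    case False
    then show ?thesis using f gp by (intro mult_left_mono ln_le_minus_one) auto
  qed simp
  also have "\<dots> = (f - g) + (f-g)\<^sup>2 * (1/g)" using gp by (simp add: field_simps power2_eq_square)
  also have "\<dots> \<le> (f - g) + (f-g)\<^sup>2 * A" using Ag by (intro add_left_mono mult_left_mono) auto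
  also have "\<dots> \<le> f - g + (1+A) * (f - g)\<^sup>2" by (simp add: algebra_simps)
  finally show ?thesis using True by simp
next
  case False
  show ?thesis
  proof (cases "f = 0 \<or> g = 0")
    case True
    then show ?thesis using f g A False by (auto intro!: add_nonneg_nonneg mult_nonneg_nonneg)
  next
    case nz: False
    then have fp: "f > 0" and gp: "g > 0" using f g by auto
    have eq: "f * ln (f / g) = f * ln f - f * ln g" using fp gp by (simp add: ln_divide_pos algebra_simps)
    have sq: "0 \<le> (1+A) * (f - g)\<^sup>2" using A by simp
    have lg: "- (f * ln g) \<le> f * \<bar>ln g\<bar>" using fp by (smt (verit) abs_ge_self mult_minus_right mult_left_mono abs_ge_minus_self)
    show ?thesis
    proof (cases "f \<le> 1")
      case True
      have "f * ln f \<le> 0" using fp True by (simp add: mult_nonneg_nonpos)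
      then show ?thesis using False eq sq lg fp by simp
    next
      case f1: False
      show ?thesis
      proof (cases "g \<le> 1")
        case True
        have "f * ln f \<le> f * (f - 1)" using fp by (intro mult_left_mono) (auto simp: ln_le_minus_one)
        moreover have "(f - 1)\<^sup>2 \<le> (f - g)\<^sup>2" using True f1 gp by (intro power_mono) auto
        moreover have "(f - g)\<^sup>2 \<le> (1+A) * (f - g)\<^sup>2" using A by (simp add: algebra_simps)
        ultimately show ?thesis using False eq lg by (simp add: power2_eq_square algebra_simps)
      next
        case g1: False
        have "f * ln (f / g) \<le> f * (f/g - 1)" using fp gp by (intro mult_left_mono ln_le_minus_one) auto
        also have "\<dots> = (f - g) + (f-g)\<^sup>2 * (1/g)" using gp by (simp add: field_simps power2_eq_square)
        also have "\<dots> \<le> (f - g) + (f-g)\<^sup>2 * 1" using g1 by (intro add_left_mono mult_left_mono) auto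
        also have "\<dots> \<le> f - g + (g + f * \<bar>ln g\<bar> + (1+A) * (f - g)\<^sup>2)"
          using A gp fp by (simp add: algebra_simps)
        finally show ?thesis using False by simp
      qed
    qed
  qed
qed

lemma pw_lower:
  fixes f g :: real
  assumes f: "0 \<le> f" and g: "0 \<le> g"
  shows "- (f * ln (f / g)) \<le> g"
proof (cases "f = 0 \<or> g = 0")
  case False
  then have fp: "f > 0" and gp: "g > 0" using f g by auto
  have "- (f * ln (f / g)) = f * ln (g / f)" using fp gp by (simp add: ln_divide_pos algebra_simps)
  also have "\<dots> \<le> f * (g/f - 1)" using fp gp by (intro mult_left_mono ln_le_minus_one) auto
  also have "\<dots> = g - f" using fp by (simp add: field_simps)
  finally show ?thesis using fp by simp
qed (use g in auto)

lemma young1: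
  fixes t c s :: real
  assumes t: "0 \<le> t" and c: "0 < c" and s: "1 < s"
  shows "t \<le> c powr (1 - s) * t powr s / s + c * (1 - 1/s)"
proof -
  define q where "q = s / (s - 1)"
  have q: "q > 1" "1/s + 1/q = 1" using s by (auto simp: q_def field_simps)
  have "t = (t * c powr ((1 - s)/s)) * c powr ((s-1)/s)"
    using c s by (simp add: powr_add[symmetric] field_simps)
  also have "\<dots> \<le> (t * c powr ((1 - s)/s)) powr s / s + (c powr ((s-1)/s)) powr q / q"
    using Youngs_inequality[OF s q(1) q(2)] t c by simp
  also have "(t * c powr ((1 - s)/s)) powr s = t powr s * c powr (1 - s)"
    using t c s by (simp add: powr_mult powr_powr)
  also have "(c powr ((s-1)/s)) powr q = c" using s c by (simp add: powr_powr q_def)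
  also have "c / q = c * (1 - 1/s)" using s by (simp add: q_def field_simps)
  finally show ?thesis by (simp add: algebra_simps)
qed


lemma ennreal_lin2:
  fixes a b d e :: real
  assumes "0 \<le> a" "0 \<le> b" "0 \<le> d" "0 \<le> e"
  shows "ennreal (a * b + d * e) = ennreal a * ennreal b + ennreal d * ennreal e"
  using assms by (simp add: ennreal_mult)

theorem theorem2p2:
  fixes pX pY :: "real \<Rightarrow> real" and C A s :: real
  assumes "is_density pX" and "is_density pY"
    and "\<forall>y. pY y \<le> C"
    and "absolutely_continuous (density lborel (\<lambda>y. ennreal (pY y)))
                                (density lborel (\<lambda>x. ennreal (pX x)))"
    and "A > 0" and "s > 1"
  shows "KL_dens pX pY \<le>
      ereal ((1 + \<bar>ln C\<bar>) *
        (measure (density lborel (\<lambda>y. ennreal (pY y))) {y. \<not> (pY y \<ge> 1 / A)}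
         + (\<integral>x. \<bar>pX x - pY x\<bar> \<partial>lborel)))
    + enn2ereal (enn_powr (\<integral>\<^sup>+ x. ennreal (pX x * \<bar>ln (pY x)\<bar> powr s) \<partial>lborel) (1 / s))
      * ereal ((measure (density lborel (\<lambda>y. ennreal (pY y))) {y. \<not> (pY y \<ge> 1 / A)}
         + (\<integral>x. \<bar>pX x - pY x\<bar> \<partial>lborel)) powr (1 - 1 / s))
    + ereal (1 + A) * enn2ereal (\<integral>\<^sup>+ x. ennreal ((pX x - pY x)\<^sup>2) \<partial>lborel)"
proof -
  define f where "f = pX"
  define g where "g = pY"
  have fm[measurable]: "f \<in> borel_measurable borel" and f0: "\<And>x. 0 \<le> f x"
    and f1: "(\<integral>\<^sup>+ x. ennreal (f x) \<partial>lborel) = 1"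
    using assms(1) unfolding is_density_def f_def by auto
  have gm[measurable]: "g \<in> borel_measurable borel" and g0: "\<And>x. 0 \<le> g x"
    and g1: "(\<integral>\<^sup>+ x. ennreal (g x) \<partial>lborel) = 1"
    using assms(2) unfolding is_density_def g_def by auto
  have A: "A > 0" and s: "s > 1" using assms by auto
  define B where "B = {y. \<not> (g y \<ge> 1 / A)}"
  have Bm[measurable]: "B \<in> sets borel" unfolding B_def by measurable
  define mB where "mB = measure (density lborel (\<lambda>y. ennreal (g y))) B"
  define L1 where "L1 = (\<integral>x. \<bar>f x - g x\<bar> \<partial>lborel)"
  define D where "D = mB + L1"
  define P where "P = (\<integral>\<^sup>+ x. ennreal (f x * \<bar>ln (g x)\<bar> powr s) \<partial>lborel)"
  define Q where "Q = (\<integral>\<^sup>+ x. ennreal ((f x - g x)\<^sup>2) \<partial>lborel)"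
  define h where "h x = f x * ln (f x / g x)" for x
  define w1 where "w1 x = (if 1/A \<le> g x then 0 else g x)" for x
  define w2 where "w2 x = (if 1/A \<le> g x then 0 else f x * \<bar>ln (g x)\<bar>)" for x
  define w3 where "w3 x = (1+A) * (f x - g x)\<^sup>2" for x
  have hm[measurable]: "h \<in> borel_measurable borel" unfolding h_def by measurable
  have w1m[measurable]: "w1 \<in> borel_measurable borel" unfolding w1_def by measurable
  have w2m[measurable]: "w2 \<in> borel_measurable borel" unfolding w2_def by measurable
  have w3m[measurable]: "w3 \<in> borel_measurable borel" unfolding w3_def by measurable
  have w10: "0 \<le> w1 x" and w20: "0 \<le> w2 x" and w30: "0 \<le> w3 x" for x
    using g0 f0 A by (auto simp: w1_def w2_def w3_def)
  define Pos where "Pos = (\<integral>\<^sup>+ x. ennreal (h x) \<partial>lborel)"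
  define Neg where "Neg = (\<integral>\<^sup>+ x. ennreal (- h x) \<partial>lborel)"
  define W1 where "W1 = (\<integral>\<^sup>+ x. ennreal (w1 x) \<partial>lborel)"
  define W2 where "W2 = (\<integral>\<^sup>+ x. ennreal (w2 x) \<partial>lborel)"
  define W where "W = W1 + W2 + ennreal (1+A) * Q"

  have KL: "KL_dens pX pY = enn2ereal Pos - enn2ereal Neg"
    unfolding KL_dens_def Pos_def Neg_def h_def f_def g_def by simp

  have pw: "ennreal (h x) + ennreal (g x) \<le> ennreal (- h x) + ennreal (f x) + (ennreal (w1 x) + ennreal (w2 x) + ennreal (w3 x))" for x
  proof -
    have "h x \<le> f x - g x + (w1 x + w2 x + w3 x)"
      using pw_upper[OF f0[of x] g0[of x] A] unfolding h_def w1_def w2_def w3_def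
      by (auto split: if_splits)
    note nn = f0[of x] g0[of x] w10[of x] w20[of x] w30[of x]
    show ?thesis
    proof (cases "0 \<le> h x")
      case True
      have "ennreal (h x + g x) \<le> ennreal (f x + (w1 x + w2 x + w3 x))"
        using \<open>h x \<le> _\<close> by (intro ennreal_leI) linarith
      then show ?thesis using True nn by (simp add: ennreal_neg)
    next
      case False
      have "ennreal (g x) \<le> ennreal ((- h x + f x) + (w1 x + w2 x + w3 x))"
        using \<open>h x \<le> _\<close> by (intro ennreal_leI) linarith
      also have "\<dots> = ennreal (- h x + f x) + ennreal (w1 x + w2 x + w3 x)"
        by (rule ennreal_plus) (use False nn in linarith)+
      also have "ennreal (- h x + f x) = ennreal (- h x) + ennreal (f x)"
        by (rule ennreal_plus) (use False nn in linarith)+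
      also have "ennreal (w1 x + w2 x + w3 x) = ennreal (w1 x) + ennreal (w2 x) + ennreal (w3 x)"
        using nn by simp
      finally show ?thesis using False by (simp add: ennreal_neg)
    qed
  qed
  have "Pos + 1 \<le> Neg + 1 + W"
  proof -
    have "Pos + 1 = (\<integral>\<^sup>+ x. ennreal (h x) + ennreal (g x) \<partial>lborel)"
      unfolding Pos_def by (simp add: nn_integral_add g1)
    also have "\<dots> \<le> (\<integral>\<^sup>+ x. ennreal (- h x) + ennreal (f x) + (ennreal (w1 x) + ennreal (w2 x) + ennreal (w3 x)) \<partial>lborel)"
      by (intro nn_integral_mono pw)
    also have "\<dots> = Neg + 1 + (W1 + W2 + (\<integral>\<^sup>+ x. ennreal (w3 x) \<partial>lborel))"
      unfolding Neg_def W1_def W2_def by (simp add: nn_integral_add f1)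
    also have "(\<integral>\<^sup>+ x. ennreal (w3 x) \<partial>lborel) = ennreal (1+A) * Q"
      unfolding w3_def Q_def using A by (simp add: ennreal_mult nn_integral_cmult)
    finally show ?thesis unfolding W_def by (simp add: add.assoc)
  qed
  then have PosNeg: "Pos \<le> Neg + W"
  proof -
    have "1 + Pos \<le> 1 + (Neg + W)" using \<open>Pos + 1 \<le> _\<close> by (simp add: ac_simps)
    then show ?thesis by (simp add: ennreal_add_left_cancel_le)
  qed
  have Negfin: "Neg \<le> 1"
  proof -
    have "Neg \<le> (\<integral>\<^sup>+ x. ennreal (g x) \<partial>lborel)"
      unfolding Neg_def h_def by (intro nn_integral_mono ennreal_leI pw_lower f0 g0)
    then show ?thesis using g1 by simp
  qed
  have step1: "KL_dens pX pY \<le> enn2ereal W"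
  proof -
    have "enn2ereal Pos \<le> enn2ereal Neg + enn2ereal W"
      using PosNeg by (simp add: less_eq_ennreal.rep_eq plus_ennreal.rep_eq)
    moreover have "\<bar>enn2ereal Neg\<bar> \<noteq> \<infinity>"
      using Negfin by (metis abs_ereal_ge0 enn2ereal_eq_top_iff enn2ereal_nonneg ennreal_one_neq_top neq_top_trans)
    ultimately show ?thesis unfolding KL by (simp add: ereal_minus_le add.commute)
  qed
  have fint: "integrable lborel f"
    by (rule integrableI_nonneg) (use f0 f1 in auto)
  have gint: "integrable lborel g"
    by (rule integrableI_nonneg) (use g0 g1 in auto)
  have L1eq: "(\<integral>\<^sup>+ x. ennreal \<bar>f x - g x\<bar> \<partial>lborel) = ennreal L1"
    unfolding L1_def using fint gint by (intro nn_integral_eq_integral) auto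
  have L10: "0 \<le> L1" unfolding L1_def by simp
  have W1eq: "W1 = emeasure (density lborel (\<lambda>y. ennreal (g y))) B"
    unfolding W1_def w1_def B_def
    by (subst emeasure_density) (auto intro!: nn_integral_cong simp: indicator_def not_le)
  have "W1 \<le> (\<integral>\<^sup>+ x. ennreal (g x) \<partial>lborel)"
    unfolding W1_def w1_def by (intro nn_integral_mono) (auto intro: ennreal_leI)
  then have W1fin: "W1 \<noteq> top" using g1 by (auto simp: top_unique)
  have W1mB: "W1 = ennreal mB"
    using W1fin W1eq unfolding mB_def by (metis emeasure_eq_ennreal_measure)
  have mB0: "0 \<le> mB" unfolding mB_def by simp
  have D0: "0 \<le> D" unfolding D_def using mB0 L10 by simp
  define qb where "qb x = (if 1/A \<le> g x then 0 else f x)" for x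
  have qbm[measurable]: "qb \<in> borel_measurable borel" unfolding qb_def by measurable
  define QB where "QB = (\<integral>\<^sup>+ x. ennreal (qb x) \<partial>lborel)"
  have QBD: "QB \<le> ennreal D"
  proof -
    have "QB \<le> (\<integral>\<^sup>+ x. ennreal (w1 x) + ennreal \<bar>f x - g x\<bar> \<partial>lborel)"
      unfolding QB_def
    proof (intro nn_integral_mono)
      fix x
      have "ennreal (qb x) \<le> ennreal (w1 x + \<bar>f x - g x\<bar>)"
        by (intro ennreal_leI) (auto simp: qb_def w1_def)
      then show "ennreal (qb x) \<le> ennreal (w1 x) + ennreal \<bar>f x - g x\<bar>"
        using w10[of x] by simp
    qed
    also have "\<dots> = W1 + ennreal L1" unfolding W1_def using L1eq by (simp add: nn_integral_add)
    also have "\<dots> = ennreal D" unfolding D_def W1mB using mB0 L10 by simp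
    finally show ?thesis .
  qed
  have young_int: "W2 \<le> ennreal (c powr (1 - s) / s) * P + ennreal (c * (1 - 1/s)) * QB" if c: "c > 0" for c
  proof -
    have "W2 \<le> (\<integral>\<^sup>+ x. ennreal (c powr (1 - s) / s) * ennreal (f x * \<bar>ln (g x)\<bar> powr s)
                + ennreal (c * (1 - 1/s)) * ennreal (qb x) \<partial>lborel)"
      unfolding W2_def
    proof (intro nn_integral_mono)
      fix x
      have c1: "0 \<le> c powr (1 - s) / s" "0 \<le> c * (1 - 1/s)" using c s by auto
      have "w2 x \<le> c powr (1 - s) / s * (f x * \<bar>ln (g x)\<bar> powr s) + c * (1 - 1/s) * qb x"
      proof (cases "1/A \<le> g x")
        case True
        then show ?thesis using c1 f0[of x] s by (auto simp: w2_def qb_def intro!: divide_nonneg_nonneg mult_nonneg_nonneg)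
      next
        case False
        have "f x * \<bar>ln (g x)\<bar> \<le> f x * (c powr (1 - s) * \<bar>ln (g x)\<bar> powr s / s + c * (1 - 1/s))"
          by (intro mult_left_mono young1 f0 c s) simp
        then show ?thesis using False by (simp add: w2_def qb_def algebra_simps)
      qed
      then have "ennreal (w2 x) \<le> ennreal (c powr (1 - s) / s * (f x * \<bar>ln (g x)\<bar> powr s) + c * (1 - 1/s) * qb x)"
        by (rule ennreal_leI)
      also have "\<dots> = ennreal (c powr (1 - s) / s) * ennreal (f x * \<bar>ln (g x)\<bar> powr s)
                + ennreal (c * (1 - 1/s)) * ennreal (qb x)"
        by (rule ennreal_lin2) (use c1 f0[of x] in \<open>auto simp: qb_def\<close>)
      finally show "ennreal (w2 x) \<le> \<dots>" .
    qed
    also have "\<dots> = ennreal (c powr (1 - s) / s) * P + ennreal (c * (1 - 1/s)) * QB"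
      unfolding P_def QB_def by (simp add: nn_integral_add nn_integral_cmult)
    finally show ?thesis .
  qed
  have W2zero: "W2 = 0" if "QB = 0 \<or> P = 0"
  proof -
    have "AE x in lborel. ennreal (qb x) = 0 \<or> ennreal (f x * \<bar>ln (g x)\<bar> powr s) = 0"
      using that unfolding QB_def P_def by (auto simp: nn_integral_0_iff_AE)
    then have "AE x in lborel. ennreal (w2 x) = 0"
    proof (rule eventually_mono)
      fix x assume "ennreal (qb x) = 0 \<or> ennreal (f x * \<bar>ln (g x)\<bar> powr s) = 0"
      then have "qb x \<le> 0 \<or> f x * \<bar>ln (g x)\<bar> powr s \<le> 0" by (auto simp: ennreal_eq_0_iff)
      moreover have "0 \<le> \<bar>ln (g x)\<bar> powr s" by simp
      ultimately have "f x = 0 \<or> 1/A \<le> g x \<or> \<bar>ln (g x)\<bar> powr s = 0"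
        using f0[of x] unfolding qb_def
        by (cases "1/A \<le> g x") (auto simp: mult_le_0_iff)
      then have "f x = 0 \<or> 1/A \<le> g x \<or> \<bar>ln (g x)\<bar> = 0"
        by auto
      then show "ennreal (w2 x) = 0" by (auto simp: w2_def)
    qed
    then show ?thesis unfolding W2_def by (simp add: nn_integral_0_iff_AE)
  qed
  have W2bound: "W2 \<le> enn_powr P (1/s) * ennreal (D powr (1 - 1/s))"
  proof (cases "D = 0")
    case True
    then have "QB = 0" using QBD by simp
    then show ?thesis using W2zero by simp
  next
    case Dne: False
    then have Dp: "D > 0" using D0 by simp
    show ?thesis
    proof (cases "P = top")
      case True
      then show ?thesis using Dp by (simp add: enn_powr_def)
    next
      case Pfin: False
      define p where "p = enn2real P"
      have Pp: "P = ennreal p" "0 \<le> p" using Pfin unfolding p_def by (auto simp: less_top)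
      show ?thesis
      proof (cases "p = 0")
        case True
        then show ?thesis using W2zero Pp by simp
      next
        case False
        then have pp: "p > 0" using Pp by simp
        define c where "c = p powr (1/s) * D powr (- 1/s)"
        have cp: "c > 0" using pp Dp by (simp add: c_def)
        have "W2 \<le> ennreal (c powr (1 - s) / s) * ennreal p + ennreal (c * (1 - 1/s)) * ennreal D"
          using young_int[OF cp] QBD Pp by (meson add_left_mono mult_left_mono order_trans zero_le)
        also have "\<dots> = ennreal (c powr (1 - s) / s * p + c * (1 - 1/s) * D)"
          by (rule ennreal_lin2[symmetric]) (use cp s Pp D0 in auto)
        also have "c powr (1 - s) / s * p + c * (1 - 1/s) * D = p powr (1/s) * D powr (1 - 1/s)"
        proof -
          have e1: "c powr (1 - s) * p = p powr (1/s) * D powr (1 - 1/s)"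
          proof -
            have "c powr (1 - s) = p powr ((1 - s)/s) * D powr ((s - 1)/s)"
            proof -
              have "- ((1 - s) / s) = (s - 1)/s" by (simp add: minus_divide_left)
              then show ?thesis
                using pp Dp s unfolding c_def by (simp add: powr_mult powr_powr)
            qed
            moreover have "p * p powr ((1 - s)/s) = p powr (1/s)"
            proof -
              have "p * p powr ((1 - s)/s) = p powr (1 + (1 - s)/s)"
                using pp by (simp add: powr_add)
              also have "1 + (1 - s)/s = 1/s" using s by (simp add: field_simps)
              finally show ?thesis .
            qed
            moreover have "(s - 1)/s = 1 - 1/s" using s by (simp add: field_simps)
            ultimately show ?thesis by (simp add: algebra_simps)
          qed
          have e2: "c * D = p powr (1/s) * D powr (1 - 1/s)"
          proof -
            have eq: "1 + (- 1/s) = 1 - 1/s" by simp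
            have "D powr (1 - 1/s) = D powr 1 * D powr (- 1/s)"
              using powr_add[of D 1 "- 1/s"] unfolding eq .
            then have "D * D powr (- 1/s) = D powr (1 - 1/s)" using Dp by simp
            then show ?thesis unfolding c_def by (simp add: algebra_simps)
          qed
          have "c powr (1 - s) / s * p + c * (1 - 1/s) * D = (c powr (1 - s) * p) / s + (c * D) * (1 - 1/s)"
            by (simp add: algebra_simps)
          also have "\<dots> = p powr (1/s) * D powr (1 - 1/s)" unfolding e1 e2 using s by (simp add: field_simps)
          finally show ?thesis .
        qed
        also have "ennreal (p powr (1/s) * D powr (1 - 1/s)) = enn_powr P (1/s) * ennreal (D powr (1 - 1/s))"
          using Pp by (simp add: enn_powr_def ennreal_mult)
        finally show ?thesis .
      qed
    qed
  qed
  have final: "enn2ereal W \<le> ereal ((1 + \<bar>ln C\<bar>) * D) + enn2ereal (enn_powr P (1/s)) * ereal (D powr (1 - 1/s))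
      + ereal (1 + A) * enn2ereal Q"
  proof -
    have eW: "enn2ereal W = enn2ereal W1 + enn2ereal W2 + ereal (1 + A) * enn2ereal Q"
      unfolding W_def using A by (simp add: plus_ennreal.rep_eq times_ennreal.rep_eq one_ennreal.rep_eq add.commute)
    have a1: "enn2ereal W1 \<le> ereal ((1 + \<bar>ln C\<bar>) * D)"
    proof -
      have "mB \<le> (1 + \<bar>ln C\<bar>) * D" using mB0 L10 unfolding D_def
        by (smt (verit) abs_ge_zero mult_le_cancel_right1)
      then show ?thesis unfolding W1mB using mB0 by simp
    qed
    have a2: "enn2ereal W2 \<le> enn2ereal (enn_powr P (1/s)) * ereal (D powr (1 - 1/s))"
      using W2bound by (simp add: less_eq_ennreal.rep_eq times_ennreal.rep_eq)
    show ?thesis unfolding eW using a1 a2 by (intro add_mono) auto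
  qed
  show ?thesis
    using order_trans[OF step1 final]
    unfolding D_def mB_def L1_def P_def Q_def B_def f_def g_def .
qed

end
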